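(* Let $(P_t)_{t\in\mathbb{R}_+}$ be a stochastically monotone Feller semigroup on $\mathbb{R}$, and define Markov kernels $\tilde{P}_t$ on $\overline{\mathbb{R}}$ by $\tilde{P}_t(x,B)=P_t(x,B\cap\mathbb{R})$ for $x\in\mathbb{R}$, $\tilde{P}_t(+\infty,\cdot)=\delta_{+\infty}$ and $\tilde{P}_t(-\infty,\cdot)=\delta_{-\infty}$. Then $(\tilde{P}_t)_{t\ge0}$ is a Feller semigroup on $\overline{\mathbb{R}}$: for every $t\ge0$ and every continuous $f:\overline{\mathbb{R}}\to\mathbb{R}$, $\tilde{P}_tf$ is continuous on $\overline{\mathbb{R}}$, and $\lim_{t\to0^+}\sup_{x\in\overline{\mathbb{R}}}|\tilde{P}_tf(x)-f(x)|=0$.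
   Context: $\overline{\mathbb{R}}=[-\infty,+\infty]$ with metric $d_1(x,y)=|\tanh y-\tanh x|$, a compact metric space. A Markov semigroup $(P_t)$ ($P_0(x,\cdot)=\delta_x$, $P_{s+t}=P_sP_t$) on $\mathbb{R}$ is Feller if $P_tf\in\mathcal{C}_0(\mathbb{R})$ for $f\in\mathcal{C}_0(\mathbb{R})$ (continuous, vanishing at $\pm\infty$) and $\sup_x|P_tf(x)-f(x)|\to0$ as $t\to0^+$; it is stochastically monotone if $P_tf$ is non-decreasing whenever $f$ is bounded, Borel and non-decreasing. *)

theory Defs
  imports "HOL-Probability.Probability"
begin

definition C0 :: "(real \<Rightarrow> real) \<Rightarrow> bool" where
  "C0 f \<longleftrightarrow> continuous_on UNIV f \<and> (f \<longlongrightarrow> 0) at_top \<and> (f \<longlongrightarrow> 0) at_bot"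

definition kernel_apply :: "('a \<Rightarrow> 'b measure) \<Rightarrow> ('b \<Rightarrow> real) \<Rightarrow> 'a \<Rightarrow> real" where
  "kernel_apply K f x = (\<integral>y. f y \<partial>K x)"

definition markov_semigroup :: "(real \<Rightarrow> real \<Rightarrow> real measure) \<Rightarrow> bool" where
  "markov_semigroup P \<longleftrightarrow>
     (\<forall>t\<ge>0. P t \<in> borel \<rightarrow>\<^sub>M prob_algebra borel) \<and>
     (\<forall>x. P 0 x = return borel x) \<and>
     (\<forall>s\<ge>0. \<forall>t\<ge>0. \<forall>x. P (s + t) x = P s x \<bind> P t)"

definition feller :: "(real \<Rightarrow> real \<Rightarrow> real measure) \<Rightarrow> bool" where
  "feller P \<longleftrightarrow>
     (\<forall>t\<ge>0. \<forall>f. C0 f \<longrightarrow> C0 (kernel_apply (P t) f)) \<and>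
     (\<forall>f. C0 f \<longrightarrow> uniform_limit UNIV (\<lambda>t. kernel_apply (P t) f) f (at_right 0))"

definition stoch_monotone :: "(real \<Rightarrow> real \<Rightarrow> real measure) \<Rightarrow> bool" where
  "stoch_monotone P \<longleftrightarrow>
     (\<forall>t\<ge>0. \<forall>f::real \<Rightarrow> real. bounded (range f) \<and> f \<in> borel_measurable borel \<and> mono f
        \<longrightarrow> mono (kernel_apply (P t) f))"

definition ext_kernel :: "(real \<Rightarrow> real \<Rightarrow> real measure) \<Rightarrow> real \<Rightarrow> ereal \<Rightarrow> ereal measure" where
  "ext_kernel P t x = (case x of ereal r \<Rightarrow> distr (P t r) borel ereal
                         | PInfty \<Rightarrow> return borel PInfty
                         | MInfty \<Rightarrow> return borel MInfty)"

end

theory Submission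
  imports Defs
begin

definition cb :: "(real \<Rightarrow> real) \<Rightarrow> bool" where
  "cb g \<longleftrightarrow> continuous_on UNIV g \<and> (\<exists>B. \<forall>y. \<bar>g y\<bar> \<le> B)"

lemma cb_meas: "cb g \<Longrightarrow> g \<in> borel_measurable borel"
  unfolding cb_def by (auto intro: borel_measurable_continuous_onI)

lemma cb_const: "cb (\<lambda>y. c)"
  unfolding cb_def by auto

lemma cb_diff: assumes "cb g" "cb h" shows "cb (\<lambda>y. g y - h y)"
proof -
  obtain B1 B2 where c: "continuous_on UNIV g" "continuous_on UNIV h" and b: "\<forall>y. \<bar>g y\<bar> \<le> B1" "\<forall>y. \<bar>h y\<bar> \<le> B2"
    using assms unfolding cb_def by blast
  have "\<forall>y. \<bar>g y - h y\<bar> \<le> B1 + B2"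
  proof
    fix y show "\<bar>g y - h y\<bar> \<le> B1 + B2" using b[rule_format, of y] by linarith
  qed
  then show ?thesis unfolding cb_def using continuous_on_diff[OF c] by blast
qed

lemma cb_mult: assumes "cb g" "cb h" shows "cb (\<lambda>y. g y * h y)"
proof -
  obtain B1 B2 where c: "continuous_on UNIV g" "continuous_on UNIV h" and b: "\<forall>y. \<bar>g y\<bar> \<le> B1" "\<forall>y. \<bar>h y\<bar> \<le> B2"
    using assms unfolding cb_def by blast
  have "\<forall>y. \<bar>g y * h y\<bar> \<le> B1 * B2"
  proof
    fix y show "\<bar>g y * h y\<bar> \<le> B1 * B2" using b[rule_format, of y]
      by (simp add: abs_mult mult_mono')
  qed
  then show ?thesis unfolding cb_def using continuous_on_mult[OF c] by blast
qed

lemma cb_abs: "cb g \<Longrightarrow> cb (\<lambda>y. \<bar>g y\<bar>)"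
  unfolding cb_def using continuous_on_rabs by fastforce

definition up :: "real \<Rightarrow> real \<Rightarrow> real" where "up a y = max 0 (min 1 (y - a))"

lemma cb_up: "cb (up a)"
proof -
  have "continuous_on UNIV (\<lambda>y. max 0 (min 1 (y - a)))" by (intro continuous_intros)
  moreover have "\<forall>y. \<bar>max 0 (min 1 (y - a))\<bar> \<le> (1::real)" by auto
  ultimately show ?thesis unfolding cb_def up_def by blast
qed

lemma up_ge0: "0 \<le> up a y" and up_le1: "up a y \<le> 1"
  unfolding up_def by auto
lemma up_0: "y \<le> a \<Longrightarrow> up a y = 0" and up_1: "a + 1 \<le> y \<Longrightarrow> up a y = 1"
  unfolding up_def by auto
lemma up_anti: "a \<le> b \<Longrightarrow> up b y \<le> up a y"
  unfolding up_def by auto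
lemma up_mono: "mono (up a)"
  unfolding up_def mono_def by auto

lemma C0_bump: assumes "a \<le> b" "cb g" shows "C0 (\<lambda>y. g y * (up a y - up b y))"
  unfolding C0_def
proof (intro conjI)
  show "continuous_on UNIV (\<lambda>y. g y * (up a y - up b y))"
    using cb_mult[OF assms(2) cb_diff[OF cb_up cb_up]] unfolding cb_def by blast
  have "eventually (\<lambda>y. g y * (up a y - up b y) = 0) at_top"
    using eventually_ge_at_top[of "b+1"] by eventually_elim (use assms(1) in \<open>auto simp: up_1\<close>)
  then show "((\<lambda>y. g y * (up a y - up b y)) \<longlongrightarrow> 0) at_top" by (rule tendsto_eventually)
  have "eventually (\<lambda>y. g y * (up a y - up b y) = 0) at_bot"
    using eventually_le_at_bot[of "a"] by eventually_elim (use assms(1) in \<open>auto simp: up_0\<close>)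
  then show "((\<lambda>y. g y * (up a y - up b y)) \<longlongrightarrow> 0) at_bot" by (rule tendsto_eventually)
qed

lemma C0_bump1: assumes "a \<le> b" shows "C0 (\<lambda>y. up a y - up b y)"
  using C0_bump[OF assms cb_const[of 1]] by simp

lemma approx_lim:
  fixes G :: "'a \<Rightarrow> real"
  assumes "\<And>e. e > 0 \<Longrightarrow> \<exists>h c. (h \<longlongrightarrow> c) F \<and> \<bar>c - l\<bar> \<le> e \<and> eventually (\<lambda>x. \<bar>G x - h x\<bar> \<le> e) F"
  shows "(G \<longlongrightarrow> l) F"
proof (rule tendstoI)
  fix \<epsilon> :: real assume "\<epsilon> > 0"
  then have "\<epsilon>/4 > 0" by simp
  then obtain h c where h: "(h \<longlongrightarrow> c) F" "\<bar>c - l\<bar> \<le> \<epsilon>/4" "eventually (\<lambda>x. \<bar>G x - h x\<bar> \<le> \<epsilon>/4) F"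
    using assms by blast
  have "eventually (\<lambda>x. dist (h x) c < \<epsilon>/4) F" using tendstoD[OF h(1) \<open>\<epsilon>/4 > 0\<close>] .
  with h(3) show "eventually (\<lambda>x. dist (G x) l < \<epsilon>) F"
  proof eventually_elim
    case (elim x)
    then show ?case using h(2) \<open>\<epsilon> > 0\<close>
      abs_triangle_ineq[of "G x - h x" "h x - c"] abs_triangle_ineq[of "G x - c" "c - l"]
    by (simp add: dist_real_def)
  qed
qed

locale fsm =
  fixes P :: "real \<Rightarrow> real \<Rightarrow> real measure"
  assumes ms: "markov_semigroup P" and fe: "feller P" and sm: "stoch_monotone P"
begin

lemma PS: assumes "t \<ge> 0" shows "prob_space (P t x)" "sets (P t x) = sets borel"
  using ms measurable_space[of "P t" borel "prob_algebra borel" x] assms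
  by (auto simp: markov_semigroup_def space_prob_algebra)

lemma integ: assumes "t \<ge> 0" "cb g" shows "integrable (P t x) g"
proof -
  interpret prob_space "P t x" using PS(1)[OF assms(1)] .
  obtain B where B: "\<forall>y. \<bar>g y\<bar> \<le> B" using assms(2) unfolding cb_def by auto
  have m: "g \<in> borel_measurable (P t x)"
    by (subst measurable_cong_sets[OF PS(2)[OF assms(1)] refl]) (rule cb_meas[OF assms(2)])
  have "AE y in P t x. norm (g y) \<le> B" by (intro AE_I2) (use B in auto)
  then show ?thesis using integrable_const_bound m by blast
qed

abbreviation K where "K t g x \<equiv> kernel_apply (P t) g x"

lemma K_diff: assumes "t \<ge> 0" "cb g" "cb h" shows "K t (\<lambda>y. g y - h y) x = K t g x - K t h x"
  unfolding kernel_apply_def by (rule Bochner_Integration.integral_diff) (use integ assms in auto)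

lemma K_const: "t \<ge> 0 \<Longrightarrow> K t (\<lambda>y. c) x = c"
  unfolding kernel_apply_def using prob_space.prob_space[OF PS(1)] by simp

lemma K_le: assumes "t \<ge> 0" "cb g" "cb h" "\<And>y. g y \<le> h y" shows "K t g x \<le> K t h x"
  unfolding kernel_apply_def by (rule Bochner_Integration.integral_mono) (use integ assms in auto)

lemma K_abs: "t \<ge> 0 \<Longrightarrow> cb g \<Longrightarrow> \<bar>K t g x\<bar> \<le> K t (\<lambda>y. \<bar>g y\<bar>) x"
  unfolding kernel_apply_def using integral_abs_bound[of "P t x" g] by simp

lemma K_up_mono: assumes "t \<ge> 0" "x \<le> x'" shows "K t (up a) x \<le> K t (up a) x'"
proof -
  have "bounded (range (up a))" unfolding bounded_iff using up_ge0 up_le1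
    by (metis abs_of_nonneg rangeE real_norm_def)
  then have "mono (K t (up a))" using sm assms cb_meas[OF cb_up] up_mono
    unfolding stoch_monotone_def by blast
  then show ?thesis using assms(2) by (simp add: mono_def)
qed

lemma K_up_ge0: "t \<ge> 0 \<Longrightarrow> 0 \<le> K t (up a) x"
  using K_le[of t "\<lambda>y. 0" "up a"] by (simp add: K_const cb_const cb_up up_ge0)
lemma K_up_le1: "t \<ge> 0 \<Longrightarrow> K t (up a) x \<le> 1"
  using K_le[of t "up a" "\<lambda>y. 1"] by (simp add: K_const cb_const cb_up up_le1)

lemma feller_C0: "t \<ge> 0 \<Longrightarrow> C0 h \<Longrightarrow> C0 (K t h)"
  using fe unfolding feller_def by blast
lemma feller_unif: "C0 h \<Longrightarrow> uniform_limit UNIV (\<lambda>t. K t h) h (at_right 0)"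
  using fe unfolding feller_def by blast


lemma meas_P: "t \<ge> 0 \<Longrightarrow> cb g \<Longrightarrow> g \<in> borel_measurable (P t x)"
  by (subst measurable_cong_sets[OF PS(2) refl]) (auto intro: cb_meas)

lemma dom_K:
  assumes t: "t \<ge> 0" and s: "\<And>n. cb (s n)" and l: "cb l"
    and lim: "\<And>y. (\<lambda>n. s n y) \<longlonglongrightarrow> l y" and bd: "\<And>n y. \<bar>s n y\<bar> \<le> 1"
  shows "(\<lambda>n. K t (s n) x) \<longlonglongrightarrow> K t l x"
  unfolding kernel_apply_def
proof (rule integral_dominated_convergence[where w="\<lambda>y. 1"])
  show "l \<in> borel_measurable (P t x)" using meas_P[OF t l] .
  show "s n \<in> borel_measurable (P t x)" for n using meas_P[OF t s] .
  show "integrable (P t x) (\<lambda>y. 1::real)" using integ[OF t cb_const] .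
  show "AE y in P t x. (\<lambda>n. s n y) \<longlonglongrightarrow> l y" using lim by simp
  show "AE y in P t x. norm (s n y) \<le> 1" for n using bd by simp
qed

lemma tail_lo: assumes t: "t \<ge> 0" and e: "e > 0" shows "\<exists>a0. \<forall>a\<le>a0. 1 - K t (up a) x0 \<le> e"
proof -
  have lim: "(\<lambda>n. up (- real n) y) \<longlonglongrightarrow> 1" for y
  proof (rule tendsto_eventually)
    show "eventually (\<lambda>n. up (- real n) y = 1) sequentially"
      unfolding eventually_sequentially
    proof (intro exI[of _ "nat \<lceil>1 - y\<rceil>"] allI impI)
      fix n assume "nat \<lceil>1 - y\<rceil> \<le> n"
      then have "1 - y \<le> real n" by linarith
      then show "up (- real n) y = 1" by (intro up_1) linarith
    qed
  qed
  have "(\<lambda>n. K t (up (- real n)) x0) \<longlonglongrightarrow> K t (\<lambda>y. 1) x0"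
    by (rule dom_K[OF t cb_up cb_const lim]) (use up_ge0 up_le1 in \<open>simp add: abs_le_iff\<close>)
  then have L: "(\<lambda>n. K t (up (- real n)) x0) \<longlonglongrightarrow> 1" using K_const[OF t] by simp
  obtain N where N: "\<And>n. n \<ge> N \<Longrightarrow> dist (K t (up (- real n)) x0) 1 < e"
    using L e unfolding lim_sequentially by blast
  show ?thesis
  proof (intro exI[of _ "- real N"] allI impI)
    fix a assume "a \<le> - real N"
    then have "K t (up (- real N)) x0 \<le> K t (up a) x0"
      by (intro K_le[OF t cb_up cb_up] up_anti)
    moreover have "dist (K t (up (- real N)) x0) 1 < e" using N by simp
    ultimately show "1 - K t (up a) x0 \<le> e" by (simp add: dist_real_def)
  qed
qed

lemma tail_hi: assumes t: "t \<ge> 0" and e: "e > 0" shows "\<exists>a0. \<forall>a\<ge>a0. K t (up a) x0 \<le> e"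
proof -
  have lim: "(\<lambda>n. up (real n) y) \<longlonglongrightarrow> 0" for y
  proof (rule tendsto_eventually)
    show "eventually (\<lambda>n. up (real n) y = 0) sequentially"
      unfolding eventually_sequentially
    proof (intro exI[of _ "nat \<lceil>y\<rceil>"] allI impI)
      fix n assume "nat \<lceil>y\<rceil> \<le> n"
      then have "y \<le> real n" by linarith
      then show "up (real n) y = 0" by (intro up_0)
    qed
  qed
  have "(\<lambda>n. K t (up (real n)) x0) \<longlonglongrightarrow> K t (\<lambda>y. 0) x0"
    by (rule dom_K[OF t cb_up cb_const lim]) (use up_ge0 up_le1 in \<open>simp add: abs_le_iff\<close>)
  then have L: "(\<lambda>n. K t (up (real n)) x0) \<longlonglongrightarrow> 0" using K_const[OF t] by simp
  obtain N where N: "\<And>n. n \<ge> N \<Longrightarrow> dist (K t (up (real n)) x0) 0 < e"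
    using L e unfolding lim_sequentially by blast
  show ?thesis
  proof (intro exI[of _ "real N"] allI impI)
    fix a assume "a \<ge> real N"
    then have "K t (up a) x0 \<le> K t (up (real N)) x0"
      by (intro K_le[OF t cb_up cb_up] up_anti)
    moreover have "dist (K t (up (real N)) x0) 0 < e" using N by simp
    ultimately show "K t (up a) x0 \<le> e" by (simp add: dist_real_def)
  qed
qed


lemma K_cmult: "K t (\<lambda>y. c * g y) x = c * K t g x"
  unfolding kernel_apply_def by simp

lemma K_up_bump: "t \<ge> 0 \<Longrightarrow> K t (\<lambda>y. up a y - up b y) x = K t (up a) x - K t (up b) x"
  by (rule K_diff) (auto intro: cb_up)

lemma bump_err:
  assumes t: "t \<ge> 0" and g: "cb g" and B: "\<And>y. \<bar>g y\<bar> \<le> B" and ab: "a \<le> b"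
  shows "\<bar>K t g x - K t (\<lambda>y. g y * (up a y - up b y)) x\<bar> \<le> B * (1 - K t (\<lambda>y. up a y - up b y) x)"
proof -
  define ch where "ch = (\<lambda>y. up a y - up b y)"
  have cch: "cb ch" unfolding ch_def by (intro cb_diff cb_up)
  have gc: "cb (\<lambda>y. g y * ch y)" by (intro cb_mult g cch)
  have ch01: "0 \<le> ch y" "ch y \<le> 1" for y
    unfolding ch_def using up_anti[OF ab, of y] up_ge0[of b y] up_le1[of a y] by auto
  have "K t g x - K t (\<lambda>y. g y * ch y) x = K t (\<lambda>y. g y - g y * ch y) x"
    by (rule K_diff[symmetric]) (use t g gc in auto)
  also have "\<bar>\<dots>\<bar> \<le> K t (\<lambda>y. \<bar>g y - g y * ch y\<bar>) x"
    by (rule K_abs) (use t g gc in \<open>auto intro: cb_diff\<close>)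
  also have "\<dots> \<le> K t (\<lambda>y. B - B * ch y) x"
  proof (rule K_le)
    show "cb (\<lambda>y. \<bar>g y - g y * ch y\<bar>)" by (intro cb_abs cb_diff g gc)
    show "cb (\<lambda>y. B - B * ch y)" by (intro cb_diff cb_mult cb_const cch)
    fix y
    have "\<bar>g y - g y * ch y\<bar> = \<bar>g y\<bar> * (1 - ch y)"
    proof -
      have "g y - g y * ch y = g y * (1 - ch y)" by (simp add: algebra_simps)
      then show ?thesis using ch01[of y] by (simp add: abs_mult)
    qed
    also have "\<dots> \<le> B * (1 - ch y)" using B[of y] ch01[of y] by (intro mult_right_mono) auto
    finally show "\<bar>g y - g y * ch y\<bar> \<le> B - B * ch y" by (simp add: algebra_simps)
  qed (use t in auto)
  also have "\<dots> = B - B * K t ch x"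
    using K_diff[OF t cb_const cb_mult[OF cb_const cch], of B B x] K_const[OF t] K_cmult by simp
  finally show ?thesis unfolding ch_def by (simp add: algebra_simps)
qed

lemma top_bound:
  assumes t: "t \<ge> 0" and g: "cb g" and B: "\<And>y. \<bar>g y\<bar> \<le> B" and L: "\<bar>L\<bar> \<le> B"
    and M: "\<And>y. y \<ge> M \<Longrightarrow> \<bar>g y - L\<bar> \<le> d" and d: "d \<ge> 0"
  shows "\<bar>K t g x - L\<bar> \<le> d + 2 * B * (1 - K t (up M) x)"
proof -
  have gL: "cb (\<lambda>y. g y - L)" by (intro cb_diff g cb_const)
  have "K t g x - L = K t (\<lambda>y. g y - L) x" using K_diff[OF t g cb_const] K_const[OF t] by simp
  also have "\<bar>\<dots>\<bar> \<le> K t (\<lambda>y. \<bar>g y - L\<bar>) x" by (rule K_abs[OF t gL])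
  also have "\<dots> \<le> K t (\<lambda>y. (d + 2 * B) - (2 * B) * up M y) x"
  proof (rule K_le[OF t cb_abs[OF gL]])
    show "cb (\<lambda>y. (d + 2 * B) - (2 * B) * up M y)" by (intro cb_diff cb_mult cb_const cb_up)
    fix y show "\<bar>g y - L\<bar> \<le> (d + 2 * B) - (2 * B) * up M y"
    proof (cases "y \<ge> M")
      case True
      have "0 \<le> B" using B[of y] by linarith
      then have "2 * B * up M y \<le> 2 * B" using up_le1[of M y] by (intro mult_left_le) auto
      then show ?thesis using M[OF True] by linarith
    next
      case False
      then have "up M y = 0" by (intro up_0) auto
      then show ?thesis using B[of y] L d abs_triangle_ineq4[of "g y" L] by simp
    qed
  qed
  also have "\<dots> = (d + 2 * B) - 2 * B * K t (up M) x"
  proof -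
    have e1: "K t (\<lambda>y. (d + 2 * B) - (2 * B) * up M y) x = K t (\<lambda>y. d + 2 * B) x - K t (\<lambda>y. (2 * B) * up M y) x"
      by (rule K_diff[OF t cb_const cb_mult[OF cb_const cb_up]])
    have e2: "K t (\<lambda>y. (2 * B) * up M y) x = (2 * B) * K t (up M) x" by (rule K_cmult)
    show ?thesis unfolding e1 e2 K_const[OF t] by simp
  qed
  finally show ?thesis by (simp add: algebra_simps)
qed

lemma bot_bound:
  assumes t: "t \<ge> 0" and g: "cb g" and B: "\<And>y. \<bar>g y\<bar> \<le> B" and L: "\<bar>L\<bar> \<le> B"
    and M: "\<And>y. y \<le> M \<Longrightarrow> \<bar>g y - L\<bar> \<le> d" and d: "d \<ge> 0"
  shows "\<bar>K t g x - L\<bar> \<le> d + 2 * B * K t (up (M - 1)) x"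
proof -
  have gL: "cb (\<lambda>y. g y - L)" by (intro cb_diff g cb_const)
  have "K t g x - L = K t (\<lambda>y. g y - L) x" using K_diff[OF t g cb_const] K_const[OF t] by simp
  also have "\<bar>\<dots>\<bar> \<le> K t (\<lambda>y. \<bar>g y - L\<bar>) x" by (rule K_abs[OF t gL])
  also have "\<dots> \<le> K t (\<lambda>y. d - (- 2 * B) * up (M - 1) y) x"
  proof (rule K_le[OF t cb_abs[OF gL]])
    show "cb (\<lambda>y. d - (- 2 * B) * up (M - 1) y)" by (intro cb_diff cb_mult cb_const cb_up)
    fix y show "\<bar>g y - L\<bar> \<le> d - (- 2 * B) * up (M - 1) y"
    proof (cases "y \<le> M")
      case True
      have "0 \<le> B" using B[of y] by linarith
      then have "0 \<le> 2 * B * up (M - 1) y" using up_ge0[of "M-1" y] by simp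
      then show ?thesis using M[OF True] by linarith
    next
      case False
      then have "up (M - 1) y = 1" by (intro up_1) auto
      then show ?thesis using B[of y] L d abs_triangle_ineq4[of "g y" L] by simp
    qed
  qed
  also have "\<dots> = d + 2 * B * K t (up (M - 1)) x"
  proof -
    have e1: "K t (\<lambda>y. d - (- 2 * B) * up (M - 1) y) x = K t (\<lambda>y. d) x - K t (\<lambda>y. (- 2 * B) * up (M - 1) y) x"
      by (rule K_diff[OF t cb_const cb_mult[OF cb_const cb_up]])
    have e2: "K t (\<lambda>y. (- 2 * B) * up (M - 1) y) x = (- 2 * B) * K t (up (M - 1)) x" by (rule K_cmult)
    show ?thesis unfolding e1 e2 K_const[OF t] by simp
  qed
  finally show ?thesis by (simp add: algebra_simps)
qed


lemma K_isCont: "t \<ge> 0 \<Longrightarrow> C0 h \<Longrightarrow> isCont (K t h) x"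
  using feller_C0[of t h] unfolding C0_def
  by (simp add: continuous_on_eq_continuous_at)

lemma K_top: "t \<ge> 0 \<Longrightarrow> C0 h \<Longrightarrow> (K t h \<longlongrightarrow> 0) at_top"
  using feller_C0[of t h] unfolding C0_def by blast

lemma K_bot: "t \<ge> 0 \<Longrightarrow> C0 h \<Longrightarrow> (K t h \<longlongrightarrow> 0) at_bot"
  using feller_C0[of t h] unfolding C0_def by blast

lemma cont_fin: assumes t: "t \<ge> 0" and g: "cb g" shows "isCont (K t g) x0"
proof -
  obtain B where B: "\<And>y. \<bar>g y\<bar> \<le> B" using g unfolding cb_def by auto
  have B0: "0 \<le> B" using B[of 0] by linarith
  show ?thesis unfolding isCont_def
  proof (rule approx_lim)
    fix e :: real assume e: "e > 0"
    define d where "d = e / (3*B + 1)"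
    have d: "d > 0" using e B0 by (simp add: d_def)
    have "d * (3*B + 1) = e" using B0 by (simp add: d_def)
    then have Bd: "3 * B * d + d = e" by (simp add: algebra_simps)
    obtain a0 where a0: "\<forall>a\<le>a0. 1 - K t (up a) x0 \<le> d" using tail_lo[OF t d] by blast
    obtain b0 where b0: "\<forall>b\<ge>b0. K t (up b) x0 \<le> d" using tail_hi[OF t d] by blast
    define a where "a = min a0 b0"
    define b where "b = max a0 b0"
    have ab: "a \<le> b" unfolding a_def b_def by simp
    define ch where "ch = (\<lambda>y. up a y - up b y)"
    have "1 - K t (up a) x0 \<le> d" using a0 unfolding a_def by simp
    moreover have "K t (up b) x0 \<le> d" using b0 unfolding b_def by simp
    ultimately have chx0: "K t ch x0 \<ge> 1 - 2*d" unfolding ch_def K_up_bump[OF t] by simp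
    have "isCont (K t ch) x0" unfolding ch_def by (rule K_isCont[OF t C0_bump1[OF ab]])
    then have "eventually (\<lambda>x. dist (K t ch x) (K t ch x0) < d) (at x0)"
      using d unfolding isCont_def by (rule tendstoD)
    then have ev: "eventually (\<lambda>x. K t ch x > K t ch x0 - d) (at x0)"
      by eventually_elim (auto simp: dist_real_def)
    define h where "h = K t (\<lambda>y. g y * ch y)"
    have err: "\<bar>K t g x - h x\<bar> \<le> B * (1 - K t ch x)" for x
      unfolding h_def ch_def by (rule bump_err[OF t g B ab])
    show "\<exists>h c. (h \<longlongrightarrow> c) (at x0) \<and> \<bar>c - K t g x0\<bar> \<le> e \<and> eventually (\<lambda>x. \<bar>K t g x - h x\<bar> \<le> e) (at x0)"
    proof (intro exI conjI)
      show "(h \<longlongrightarrow> h x0) (at x0)" unfolding h_def ch_def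
        using K_isCont[OF t C0_bump[OF ab g]] unfolding isCont_def .
      have "B * (1 - K t ch x0) \<le> B * (2 * d)" using chx0 B0 by (intro mult_left_mono) auto
      then show "\<bar>h x0 - K t g x0\<bar> \<le> e" using err[of x0] Bd B0 d by (simp add: abs_minus_commute)
      show "eventually (\<lambda>x. \<bar>K t g x - h x\<bar> \<le> e) (at x0)"
        using ev
      proof eventually_elim
        case (elim x)
        have "B * (1 - K t ch x) \<le> B * (3 * d)" using chx0 elim B0 by (intro mult_left_mono) auto
        moreover have "B * (3 * d) = 3 * B * d" by simp
        ultimately show ?case using err[of x] Bd d by linarith
      qed
    qed
  qed
qed

lemma lim_top:
  assumes t: "t \<ge> 0" and g: "cb g" and B: "\<And>y. \<bar>g y\<bar> \<le> B" and L: "\<bar>L\<bar> \<le> B"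
    and lim: "(g \<longlongrightarrow> L) at_top"
  shows "(K t g \<longlongrightarrow> L) at_top"
proof (rule approx_lim)
  have B0: "0 \<le> B" using B[of 0] by linarith
  fix e :: real assume e: "e > 0"
  define d where "d = e / (4*B + 1)"
  have d: "d > 0" using e B0 by (simp add: d_def)
  have "d * (4*B + 1) = e" using B0 by (simp add: d_def)
  then have Bd: "4 * B * d + d = e" by (simp add: algebra_simps)
  have "eventually (\<lambda>y. dist (g y) L < d) at_top" using tendstoD[OF lim d] .
  then obtain M where M: "\<And>y. y \<ge> M \<Longrightarrow> \<bar>g y - L\<bar> \<le> d"
    unfolding eventually_at_top_linorder dist_real_def by (metis less_imp_le)
  obtain a0 where a0: "\<forall>a\<le>a0. 1 - K t (up a) M \<le> d" using tail_lo[OF t d] by blast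
  define a where "a = min a0 M"
  have aM: "a \<le> M" unfolding a_def by simp
  have a: "1 - K t (up a) M \<le> d" using a0 unfolding a_def by simp
  have "((K t (\<lambda>y. up a y - up M y)) \<longlongrightarrow> 0) at_top" by (rule K_top[OF t C0_bump1[OF aM]])
  then have ev1: "eventually (\<lambda>x. K t (\<lambda>y. up a y - up M y) x < d) at_top"
    using tendstoD[OF _ d] by (fastforce simp: dist_real_def elim: eventually_mono)
  show "\<exists>h c. (h \<longlongrightarrow> c) at_top \<and> \<bar>c - L\<bar> \<le> e \<and> eventually (\<lambda>x. \<bar>K t g x - h x\<bar> \<le> e) at_top"
  proof (intro exI conjI)
    show "((\<lambda>x. L) \<longlongrightarrow> L) at_top" by simp
    show "\<bar>L - L\<bar> \<le> e" using e by simp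
    show "eventually (\<lambda>x. \<bar>K t g x - L\<bar> \<le> e) at_top"
      using ev1 eventually_ge_at_top[of M]
    proof eventually_elim
      case (elim x)
      have "K t (up a) M \<le> K t (up a) x" using K_up_mono[OF t elim(2)] .
      then have "1 - K t (up M) x \<le> 2 * d" using elim(1) a unfolding K_up_bump[OF t] by simp
      then have "2 * B * (1 - K t (up M) x) \<le> 2 * B * (2 * d)" using B0 by (intro mult_left_mono) auto
      moreover have "\<bar>K t g x - L\<bar> \<le> d + 2 * B * (1 - K t (up M) x)"
        by (rule top_bound[OF t g B L M]) (use d in auto)
      moreover have "2 * B * (2 * d) = 4 * B * d" by simp
      ultimately show ?case using Bd by linarith
    qed
  qed
qed

lemma lim_bot:
  assumes t: "t \<ge> 0" and g: "cb g" and B: "\<And>y. \<bar>g y\<bar> \<le> B" and L: "\<bar>L\<bar> \<le> B"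
    and lim: "(g \<longlongrightarrow> L) at_bot"
  shows "(K t g \<longlongrightarrow> L) at_bot"
proof (rule approx_lim)
  have B0: "0 \<le> B" using B[of 0] by linarith
  fix e :: real assume e: "e > 0"
  define d where "d = e / (4*B + 1)"
  have d: "d > 0" using e B0 by (simp add: d_def)
  have "d * (4*B + 1) = e" using B0 by (simp add: d_def)
  then have Bd: "4 * B * d + d = e" by (simp add: algebra_simps)
  have "eventually (\<lambda>y. dist (g y) L < d) at_bot" using tendstoD[OF lim d] .
  then obtain M where M: "\<And>y. y \<le> M \<Longrightarrow> \<bar>g y - L\<bar> \<le> d"
    unfolding eventually_at_bot_linorder dist_real_def by (metis less_imp_le)
  obtain b0 where b0: "\<forall>b\<ge>b0. K t (up b) M \<le> d" using tail_hi[OF t d] by blast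
  define b where "b = max b0 (M - 1)"
  have bM: "M - 1 \<le> b" unfolding b_def by simp
  have b: "K t (up b) M \<le> d" using b0 unfolding b_def by simp
  have "((K t (\<lambda>y. up (M - 1) y - up b y)) \<longlongrightarrow> 0) at_bot" by (rule K_bot[OF t C0_bump1[OF bM]])
  then have ev1: "eventually (\<lambda>x. K t (\<lambda>y. up (M - 1) y - up b y) x < d) at_bot"
    using tendstoD[OF _ d] by (fastforce simp: dist_real_def elim: eventually_mono)
  show "\<exists>h c. (h \<longlongrightarrow> c) at_bot \<and> \<bar>c - L\<bar> \<le> e \<and> eventually (\<lambda>x. \<bar>K t g x - h x\<bar> \<le> e) at_bot"
  proof (intro exI conjI)
    show "((\<lambda>x. L) \<longlongrightarrow> L) at_bot" by simp
    show "\<bar>L - L\<bar> \<le> e" using e by simp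
    show "eventually (\<lambda>x. \<bar>K t g x - L\<bar> \<le> e) at_bot"
      using ev1 eventually_le_at_bot[of M]
    proof eventually_elim
      case (elim x)
      have "K t (up b) x \<le> K t (up b) M" using K_up_mono[OF t elim(2)] .
      then have "K t (up (M - 1)) x \<le> 2 * d" using elim(1) b unfolding K_up_bump[OF t] by simp
      then have "2 * B * K t (up (M - 1)) x \<le> 2 * B * (2 * d)" using B0 by (intro mult_left_mono) auto
      moreover have "\<bar>K t g x - L\<bar> \<le> d + 2 * B * K t (up (M - 1)) x"
        by (rule bot_bound[OF t g B L M]) (use d in auto)
      moreover have "2 * B * (2 * d) = 4 * B * d" by simp
      ultimately show ?case using Bd by linarith
    qed
  qed
qed


lemma unif_ev:
  assumes "C0 h" "d > 0"
  shows "eventually (\<lambda>t. \<forall>x. \<bar>K t h x - h x\<bar> < d) (at_right 0)"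
  using feller_unif[OF assms(1)] assms(2) unfolding uniform_limit_iff dist_real_def by auto

lemma unif:
  assumes g: "cb g" and B: "\<And>y. \<bar>g y\<bar> \<le> B" and Lp: "\<bar>Lp\<bar> \<le> B" and Lm: "\<bar>Lm\<bar> \<le> B"
    and lp: "(g \<longlongrightarrow> Lp) at_top" and lm: "(g \<longlongrightarrow> Lm) at_bot"
  shows "uniform_limit UNIV (\<lambda>t. K t g) g (at_right 0)"
  unfolding uniform_limit_iff
proof (intro allI impI)
  have B0: "0 \<le> B" using B[of 0] by linarith
  fix e :: real assume e: "e > 0"
  define d where "d = e / (2*B + 3)"
  have d: "d > 0" using e B0 by (simp add: d_def)
  have "d * (2*B + 3) = e" using B0 by (simp add: d_def)
  then have Bd: "2 * B * d + 3 * d = e" by (simp add: algebra_simps)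
  have "eventually (\<lambda>y. dist (g y) Lp < d) at_top" using tendstoD[OF lp d] .
  then obtain M1 where M1: "\<And>y. y \<ge> M1 \<Longrightarrow> \<bar>g y - Lp\<bar> \<le> d"
    unfolding eventually_at_top_linorder dist_real_def by (metis less_imp_le)
  have "eventually (\<lambda>y. dist (g y) Lm < d) at_bot" using tendstoD[OF lm d] .
  then obtain M2 where M2: "\<And>y. y \<le> M2 \<Longrightarrow> \<bar>g y - Lm\<bar> \<le> d"
    unfolding eventually_at_bot_linorder dist_real_def by (metis less_imp_le)
  define M where "M = max 0 (max M1 (- M2))"
  have M0: "M \<ge> 0" unfolding M_def by simp
  have Mp: "\<And>y. y \<ge> M \<Longrightarrow> \<bar>g y - Lp\<bar> \<le> d" using M1 unfolding M_def by simp
  have Mm: "\<And>y. y \<le> - M \<Longrightarrow> \<bar>g y - Lm\<bar> \<le> d" using M2 unfolding M_def by simp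
  define ch where "ch = (\<lambda>y. up (- M - 3) y - up (M + 2) y)"
  define ch1 where "ch1 = (\<lambda>y. up M y - up (M + 2) y)"
  define ch2 where "ch2 = (\<lambda>y. up (- M - 4) y - up (- M - 1) y)"
  have ab: "- M - 3 \<le> M + 2" using M0 by simp
  have C_ch: "C0 ch" unfolding ch_def by (rule C0_bump1) (use M0 in simp)
  have C_gch: "C0 (\<lambda>y. g y * ch y)" unfolding ch_def by (rule C0_bump[OF ab g])
  have C_ch1: "C0 ch1" unfolding ch1_def by (rule C0_bump1) simp
  have C_ch2: "C0 ch2" unfolding ch2_def by (rule C0_bump1) simp
  have ch1v: "ch1 (M + 2) = 1" unfolding ch1_def by (simp add: up_1 up_0)
  have ch2v: "ch2 (- M - 2) = 1" unfolding ch2_def by (simp add: up_1 up_0)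
  show "eventually (\<lambda>t. \<forall>x\<in>UNIV. dist (K t g x) (g x) < e) (at_right 0)"
    using unif_ev[OF C_ch d] unif_ev[OF C_gch d] unif_ev[OF C_ch1 d] unif_ev[OF C_ch2 d]
      eventually_at_right_less[of "0::real"]
  proof eventually_elim
    case (elim t)
    then have t: "t \<ge> 0" by simp
    show ?case
    proof
      fix x
      show "dist (K t g x) (g x) < e"
      proof (cases "x \<ge> M + 2")
        case True
        have "\<bar>K t ch1 (M + 2) - ch1 (M + 2)\<bar> < d" using elim(3) by blast
        then have "K t ch1 (M + 2) > 1 - d" unfolding ch1v by linarith
        moreover have "K t ch1 (M + 2) \<le> K t (up M) (M + 2)"
          unfolding ch1_def by (rule K_le[OF t]) (auto intro: cb_diff cb_up simp: up_ge0)
        moreover have "K t (up M) (M + 2) \<le> K t (up M) x" using K_up_mono[OF t True] .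
        ultimately have "1 - K t (up M) x \<le> d" by linarith
        then have "2 * B * (1 - K t (up M) x) \<le> 2 * B * d" using B0 by (intro mult_left_mono) auto
        moreover have "\<bar>K t g x - Lp\<bar> \<le> d + 2 * B * (1 - K t (up M) x)"
          by (rule top_bound[OF t g B Lp Mp]) (use d in auto)
        moreover have "\<bar>g x - Lp\<bar> \<le> d" using Mp True by simp
        ultimately show ?thesis using Bd d unfolding dist_real_def by linarith
      next
        case False
        show ?thesis
        proof (cases "x \<le> - M - 2")
          case True
          have "\<bar>K t ch2 (- M - 2) - ch2 (- M - 2)\<bar> < d" using elim(4) by blast
          then have "K t ch2 (- M - 2) > 1 - d" unfolding ch2v by linarith
          moreover have "K t ch2 (- M - 2) = K t (up (- M - 4)) (- M - 2) - K t (up (- M - 1)) (- M - 2)"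
            unfolding ch2_def by (rule K_up_bump[OF t])
          moreover have "K t (up (- M - 4)) (- M - 2) \<le> 1" by (rule K_up_le1[OF t])
          moreover have "K t (up (- M - 1)) x \<le> K t (up (- M - 1)) (- M - 2)" using K_up_mono[OF t True] .
          ultimately have "K t (up (- M - 1)) x \<le> d" by linarith
          then have "2 * B * K t (up (- M - 1)) x \<le> 2 * B * d" using B0 by (intro mult_left_mono) auto
          moreover have "\<bar>K t g x - Lm\<bar> \<le> d + 2 * B * K t (up (- M - 1)) x"
            by (rule bot_bound[OF t g B Lm Mm]) (use d in auto)
          moreover have "\<bar>g x - Lm\<bar> \<le> d" using Mm True by simp
          ultimately show ?thesis using Bd d unfolding dist_real_def by linarith
        next
          case False2: False
          have chx: "ch x = 1" unfolding ch_def using False False2 by (simp add: up_1 up_0)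
          have "\<bar>K t g x - K t (\<lambda>y. g y * ch y) x\<bar> \<le> B * (1 - K t ch x)"
            unfolding ch_def by (rule bump_err[OF t g B ab])
          moreover have "\<bar>K t ch x - ch x\<bar> < d" using elim(1) by blast
          then have "1 - K t ch x \<le> d" unfolding chx by linarith
          then have "B * (1 - K t ch x) \<le> B * d" using B0 by (intro mult_left_mono) auto
          moreover have "\<bar>K t (\<lambda>y. g y * ch y) x - g x * ch x\<bar> < d" using elim(2) by blast
          then have "\<bar>K t (\<lambda>y. g y * ch y) x - g x\<bar> < d" unfolding chx by simp
          ultimately show ?thesis using Bd d B0 unfolding dist_real_def by linarith
        qed
      qed
    qed
  qed
qed


lemma F_fin:
  assumes t: "t \<ge> 0" and f: "continuous_on UNIV f"
  shows "kernel_apply (ext_kernel P t) f (ereal r) = K t (\<lambda>y. f (ereal y)) r"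
proof -
  have m1: "ereal \<in> P t r \<rightarrow>\<^sub>M borel"
    by (subst measurable_cong_sets[OF PS(2)[OF t] refl])
       (intro borel_measurable_continuous_onI continuous_on_ereal continuous_on_id)
  have m2: "f \<in> borel_measurable borel" by (rule borel_measurable_continuous_onI[OF f])
  show ?thesis unfolding kernel_apply_def ext_kernel_def
    using integral_distr[OF m1 m2] by simp
qed

lemma F_PInf: "continuous_on UNIV f \<Longrightarrow> kernel_apply (ext_kernel P t) f \<infinity> = f \<infinity>"
  unfolding kernel_apply_def ext_kernel_def
  by (simp add: integral_return borel_measurable_continuous_onI)

lemma F_MInf: "continuous_on UNIV f \<Longrightarrow> kernel_apply (ext_kernel P t) f (-\<infinity>) = f (-\<infinity>)"
  unfolding kernel_apply_def ext_kernel_def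
  by (simp add: integral_return borel_measurable_continuous_onI)

end

lemma ereal_fun_facts:
  fixes f :: "ereal \<Rightarrow> real"
  assumes f: "continuous_on UNIV f"
  shows "\<exists>B. \<forall>z. \<bar>f z\<bar> \<le> B" "cb (\<lambda>y. f (ereal y))"
    "((\<lambda>y. f (ereal y)) \<longlongrightarrow> f \<infinity>) at_top" "((\<lambda>y. f (ereal y)) \<longlongrightarrow> f (-\<infinity>)) at_bot"
proof -
  have "compact (f ` UNIV)" by (rule compact_continuous_image[OF f compact_UNIV])
  then have "bounded (f ` UNIV)" by (rule compact_imp_bounded)
  then show B: "\<exists>B. \<forall>z. \<bar>f z\<bar> \<le> B" unfolding bounded_iff by auto
  have "continuous_on UNIV (f \<circ> ereal)"
    by (rule continuous_on_compose) (auto intro: continuous_on_subset[OF f] continuous_on_ereal continuous_on_id)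
  then show "cb (\<lambda>y. f (ereal y))" using B unfolding cb_def comp_def by auto
  have "isCont f z" for z using f by (simp add: continuous_on_eq_continuous_at)
  then have lim: "(f \<longlongrightarrow> f z) (at z)" for z unfolding isCont_def by blast
  have "(f \<longlongrightarrow> f \<infinity>) (at_left \<infinity>)" by (rule tendsto_mono[OF _ lim]) (simp add: at_le)
  then show "((\<lambda>y. f (ereal y)) \<longlongrightarrow> f \<infinity>) at_top"
    unfolding at_left_PInf tendsto_compose_filtermap[symmetric] comp_def .
  have "(f \<longlongrightarrow> f (-\<infinity>)) (at_right (-\<infinity>))" by (rule tendsto_mono[OF _ lim]) (simp add: at_le)
  then show "((\<lambda>y. f (ereal y)) \<longlongrightarrow> f (-\<infinity>)) at_bot"
    unfolding at_right_MInf tendsto_compose_filtermap[symmetric] comp_def .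
qed

theorem proposition2p8:
  fixes P :: "real \<Rightarrow> real \<Rightarrow> real measure"
  assumes "markov_semigroup P" and "feller P" and "stoch_monotone P"
  shows "(\<forall>t\<ge>0. \<forall>f :: ereal \<Rightarrow> real. continuous_on UNIV f \<longrightarrow>
            continuous_on UNIV (kernel_apply (ext_kernel P t) f))
       \<and> (\<forall>f :: ereal \<Rightarrow> real. continuous_on UNIV f \<longrightarrow>
            uniform_limit UNIV (\<lambda>t. kernel_apply (ext_kernel P t) f) f (at_right 0))"
proof -
  interpret fsm P using assms by unfold_locales
  have part1: "continuous_on UNIV (kernel_apply (ext_kernel P t) f)"
    if t: "t \<ge> 0" and f: "continuous_on UNIV f" for t and f :: "ereal \<Rightarrow> real"
  proof -
    define g where "g = (\<lambda>y. f (ereal y))"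
    obtain B where B: "\<And>z. \<bar>f z\<bar> \<le> B" using ereal_fun_facts(1)[OF f] by blast
    have g: "cb g" unfolding g_def by (rule ereal_fun_facts(2)[OF f])
    have Bg: "\<And>y. \<bar>g y\<bar> \<le> B" unfolding g_def using B by simp
    have lp: "(g \<longlongrightarrow> f \<infinity>) at_top" unfolding g_def by (rule ereal_fun_facts(3)[OF f])
    have lm: "(g \<longlongrightarrow> f (-\<infinity>)) at_bot" unfolding g_def by (rule ereal_fun_facts(4)[OF f])
    define F where "F = kernel_apply (ext_kernel P t) f"
    have Fe: "F \<circ> ereal = K t g" unfolding F_def g_def comp_def using F_fin[OF t f] by auto
    have "isCont F z" for z
    proof (cases z)
      case (real r)
      have "isCont (K t g) r" by (rule cont_fin[OF t g])
      then have "((F \<circ> ereal) \<longlongrightarrow> F (ereal r)) (at r)"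
        unfolding Fe isCont_def using Fe by (metis comp_apply)
      then have "(F \<longlongrightarrow> F (ereal r)) (at (ereal r))" unfolding at_ereal tendsto_compose_filtermap[symmetric] .
      then show ?thesis unfolding real continuous_at .
    next
      case PInf
      have "((F \<circ> ereal) \<longlongrightarrow> f \<infinity>) at_top" unfolding Fe by (rule lim_top[OF t g Bg B lp])
      then have l1: "(F \<longlongrightarrow> F \<infinity>) (at_left \<infinity>)"
        unfolding at_left_PInf tendsto_compose_filtermap F_def F_PInf[OF f] .
      have "at_right (\<infinity>::ereal) = bot" using trivial_limit_at_right_top[where 'a=ereal] unfolding top_ereal_def .
      then have l2: "(F \<longlongrightarrow> F \<infinity>) (at_right \<infinity>)" by simp
      show ?thesis unfolding PInf continuous_at by (rule filterlim_split_at[OF l1 l2])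
    next
      case MInf
      have "((F \<circ> ereal) \<longlongrightarrow> f (-\<infinity>)) at_bot" unfolding Fe by (rule lim_bot[OF t g Bg B lm])
      then have l2: "(F \<longlongrightarrow> F (-\<infinity>)) (at_right (-\<infinity>))"
        unfolding at_right_MInf tendsto_compose_filtermap F_def F_MInf[OF f] .
      have "at_left (-\<infinity>::ereal) = bot" using trivial_limit_at_left_bot[where 'a=ereal] unfolding bot_ereal_def .
      then have l1: "(F \<longlongrightarrow> F (-\<infinity>)) (at_left (-\<infinity>))" by simp
      show ?thesis unfolding MInf continuous_at by (rule filterlim_split_at[OF l1 l2])
    qed
    then show ?thesis unfolding F_def by (simp add: continuous_on_eq_continuous_at)
  qed
  have part2: "uniform_limit UNIV (\<lambda>t. kernel_apply (ext_kernel P t) f) f (at_right 0)"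
    if f: "continuous_on UNIV f" for f :: "ereal \<Rightarrow> real"
  proof -
    define g where "g = (\<lambda>y. f (ereal y))"
    obtain B where B: "\<And>z. \<bar>f z\<bar> \<le> B" using ereal_fun_facts(1)[OF f] by blast
    have g: "cb g" unfolding g_def by (rule ereal_fun_facts(2)[OF f])
    have Bg: "\<And>y. \<bar>g y\<bar> \<le> B" unfolding g_def using B by simp
    have lp: "(g \<longlongrightarrow> f \<infinity>) at_top" unfolding g_def by (rule ereal_fun_facts(3)[OF f])
    have lm: "(g \<longlongrightarrow> f (-\<infinity>)) at_bot" unfolding g_def by (rule ereal_fun_facts(4)[OF f])
    have U: "uniform_limit UNIV (\<lambda>t. K t g) g (at_right 0)" by (rule unif[OF g Bg B B lp lm])
    show ?thesis unfolding uniform_limit_iff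
    proof (intro allI impI)
      fix e :: real assume e: "e > 0"
      show "eventually (\<lambda>t. \<forall>z\<in>UNIV. dist (kernel_apply (ext_kernel P t) f z) (f z) < e) (at_right 0)"
        using U[unfolded uniform_limit_iff, rule_format, OF e] eventually_at_right_less[of "0::real"]
      proof eventually_elim
        case (elim t)
        show ?case
        proof
          fix z show "dist (kernel_apply (ext_kernel P t) f z) (f z) < e"
          proof (cases z)
            case (real r)
            then show ?thesis using elim F_fin[of t f r] f unfolding g_def by auto
          next
            case PInf
            then show ?thesis using F_PInf[OF f] e by simp
          next
            case MInf
            then show ?thesis using F_MInf[OF f] e by simp
          qed
        qed
      qed
    qed
  qed
  show ?thesis using part1 part2 by blast
qed

end
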